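(* For every $n\in\mathbb N$ the set $\mathbb P^T_n=\{p^{(k)}_n: k\in\mathbb N\}$ is not (R)-dense. Moreover, $\lim_{k\to+\infty}p^{(k+1)}_n/p^{(k)}_n=+\infty$, and $R^d(\mathbb P^T_n)\cap(0,+\infty)=\emptyset$.
   Context: Let $p_n$ denote the $n$-th prime number. Define $p^{(0)}_n=n$ and recursively $p^{(k+1)}_n=p_{p^{(k)}_n}$ for $k\in\mathbb N_0$. For $A\subset\mathbb N$, its ratio set is $R(A)=\{a/b:a,b\in A\}$; $A$ is (R)-dense if $R(A)$ is dense in $(0,+\infty)$. For $B\subset(0,+\infty)$, $B^d$ denotes the set of accumulation points of $B$, and $R^d(A)=(R(A))^d$. *)

theory Defs
  imports "HOL-Analysis.Analysis" "HOL-Computational_Algebra.Primes" "HOL-Library.Infinite_Set"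
begin

text \<open>The n-th prime, 1-indexed: nth_prime 1 = 2, nth_prime 2 = 3, ...
  (value at 0 is irrelevant junk).\<close>
definition nth_prime :: "nat \<Rightarrow> nat" where
  "nth_prime n = enumerate {p::nat. prime p} (n - 1)"

definition iter_prime :: "nat \<Rightarrow> nat \<Rightarrow> nat" where
  "iter_prime k n = (nth_prime ^^ k) n"

definition PT :: "nat \<Rightarrow> nat set" where
  "PT n = {iter_prime k n | k. k \<ge> 1}"

definition ratio_set :: "nat set \<Rightarrow> real set" where
  "ratio_set A = {real a / real b | a b. a \<in> A \<and> b \<in> A}"

definition R_dense :: "nat set \<Rightarrow> bool" where
  "R_dense A \<longleftrightarrow> {0<..} \<subseteq> closure (ratio_set A)"

end

theory Submission
  imports Defs
begin

lemma prod_primes_dvd: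
  fixes A :: "nat set"
  assumes "finite A" "\<And>p. p \<in> A \<Longrightarrow> prime p" "\<And>p. p \<in> A \<Longrightarrow> p dvd x"
  shows "\<Prod>A dvd x"
  using assms
proof (induction A rule: finite_induct)
  case empty then show ?case by simp
next
  case (insert p A)
  have "coprime p (\<Prod>A)"
    using insert by (intro prod_coprime_right) (metis insertCI primes_coprime)
  then show ?case using insert by (simp add: divides_mult)
qed

lemma choose_odd_le: "((2*m+1) choose m) \<le> 4^m"
proof -
  have "((2*m+1) choose m) = ((2*m+1) choose (m+1))"
    by (subst binomial_symmetric) auto
  moreover have "((2*m+1) choose m) + ((2*m+1) choose (m+1)) \<le> (\<Sum>k\<le>2*m+1. (2*m+1) choose k)"
  proof -
    have "(\<Sum>k\<in>{m,m+1}. (2*m+1) choose k) \<le> (\<Sum>k\<le>2*m+1. (2*m+1) choose k)"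
      by (intro sum_mono2) auto
    then show ?thesis by simp
  qed
  moreover have "(\<Sum>k\<le>2*m+1. (2*m+1) choose k) = 2 * 4^m"
  proof -
    have "(2::nat)^(2*m+1) = 2*4^m" by (simp add: power_mult)
    then show ?thesis by (simp only: choose_row_sum)
  qed
  ultimately show ?thesis by simp
qed

lemma prime_dvd_choose_mid:
  assumes "prime p" "m + 1 < p" "p \<le> 2*m+1"
  shows "p dvd ((2*m+1) choose m)"
proof -
  have "p dvd fact (2*m+1)" using prime_dvd_fact_iff[OF assms(1), of "2*m+1"] assms(3) by blast
  moreover have "\<not> p dvd (fact m * fact (m+1))"
    using assms prime_dvd_fact_iff[OF assms(1), of m] prime_dvd_fact_iff[OF assms(1), of "m+1"] prime_dvd_mult_iff[OF assms(1)] by auto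
  moreover have "(fact (2*m+1)::nat) = fact m * fact (m+1) * ((2*m+1) choose m)"
    using binomial_fact_lemma[of m "2*m+1"] by simp
  ultimately show ?thesis using assms(1) by (metis prime_dvd_mult_iff)
qed

definition primorial :: "nat \<Rightarrow> nat" where
  "primorial n = \<Prod>{p. prime p \<and> p \<le> n}"

lemma primorial_le: "primorial n \<le> 4^n"
proof (induction n rule: less_induct)
  case (less n)
  show ?case
  proof (cases "n \<le> 2")
    case True
    have sub: "{p. prime p \<and> p \<le> n} \<subseteq> {2}"
    proof
      fix p assume "p \<in> {p. prime p \<and> p \<le> n}"
      then have "prime p" "p \<le> n" by auto
      moreover have "2 \<le> p" using \<open>prime p\<close> by (rule prime_ge_2_nat)
      ultimately show "p \<in> {2}" using True by simp
    qed
    show ?thesis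
    proof (cases "n = 0")
      case True
      then have "{p. prime p \<and> p \<le> n} = {}" using sub by auto
      then have "primorial n = 1" unfolding primorial_def by (simp only: prod.empty)
      then show ?thesis by simp
    next
      case False
      have "primorial n dvd \<Prod>{2::nat}" unfolding primorial_def
        by (rule prod_dvd_prod_subset[OF _ sub]) simp
      then have "primorial n \<le> 2" by (simp add: dvd_imp_le)
      also have "(4::nat)^1 \<le> 4^n" by (rule power_increasing) (use False in auto)
      then have "(2::nat) \<le> 4^n" by simp
      finally show ?thesis .
    qed
  next
    case False
    show ?thesis
    proof (cases "even n")
      case True
      then have "\<not> prime n" using False prime_odd_nat[of n] by auto
      then have "{p. prime p \<and> p \<le> n} = {p. prime p \<and> p \<le> n - 1}" using False
        by (metis Suc_pred' gr_zeroI le_Suc_eq le_zero_eq nat_le_linear)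
      then have "primorial n = primorial (n-1)" by (simp add: primorial_def)
      also have "\<dots> \<le> 4^(n-1)" using less False by simp
      also have "\<dots> \<le> 4^n" by simp
      finally show ?thesis .
    next
      case odd: False
      then obtain m where n: "n = 2*m+1" by (metis oddE)
      have split: "{p. prime p \<and> p \<le> n} = {p. prime p \<and> p \<le> m+1} \<union> {p. prime p \<and> m+1 < p \<and> p \<le> n}"
        by (auto simp: not_le n)
      have "primorial n = primorial (m+1) * \<Prod>{p. prime p \<and> m+1 < p \<and> p \<le> n}"
        unfolding primorial_def split by (rule prod.union_disjoint) auto
      also have "\<Prod>{p. prime p \<and> m+1 < p \<and> p \<le> n} \<le> (2*m+1) choose m"
        by (rule dvd_imp_le, rule prod_primes_dvd) (use n prime_dvd_choose_mid in force)+
      also have "\<dots> \<le> 4^m" by (rule choose_odd_le)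
      also have "m + 1 < n" using n False by simp
      then have "primorial (m+1) \<le> 4^(m+1)" using less by blast
      then have "primorial (m+1) * 4^m \<le> 4^(m+1) * 4^m" by simp
      also have "4^(m+1) * 4^m = (4::nat)^n" by (simp add: n power_add[symmetric])
      finally show ?thesis by simp
    qed
  qed
qed

lemma enum_prime_ge: "enumerate {p::nat. prime p} k \<ge> k + 2"
proof (induction k)
  case 0
  have "prime (enumerate {p::nat. prime p} 0)"
    using enumerate_in_set[OF primes_infinite] by simp
  then have "2 \<le> enumerate {p::nat. prime p} 0" by (rule prime_ge_2_nat)
  then show ?case by simp
next
  case (Suc k)
  have "enumerate {p::nat. prime p} k < enumerate {p::nat. prime p} (Suc k)"
    by (rule enumerate_step[OF primes_infinite])
  then show ?case using Suc by simp
qed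

lemma nth_prime_gt: "m \<ge> 1 \<Longrightarrow> nth_prime m \<ge> m + 1"
  unfolding nth_prime_def using enum_prime_ge[of "m-1"] by simp

lemma nth_prime_big:
  fixes c m :: nat
  assumes c: "c \<ge> 1" and m: "m > 2 * 16^c"
  shows "c * m \<le> nth_prime m"
proof (rule ccontr)
  define P where "P = {p::nat. prime p}"
  have infP: "infinite P" unfolding P_def by (rule primes_infinite)
  define x where "x = nth_prime m"
  assume "\<not> c * m \<le> nth_prime m"
  then have xlt: "x < c * m" unfolding x_def by simp
  define r :: nat where "r = 16^c"
  define S where "S = {p. prime p \<and> p \<le> x}"
  define T where "T = {p. prime p \<and> r < p \<and> p \<le> x}"
  have finS: "finite S" "finite T" unfolding S_def T_def by auto
  have ES: "enumerate P ` {..<m} \<subseteq> S"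
  proof
    fix y assume "y \<in> enumerate P ` {..<m}"
    then obtain k where k: "k < m" "y = enumerate P k" by auto
    have "prime y" using enumerate_in_set[OF infP, of k] k unfolding P_def by simp
    moreover have "y \<le> x" unfolding x_def nth_prime_def k(2) P_def[symmetric]
      using k(1) infP by simp
    ultimately show "y \<in> S" unfolding S_def by simp
  qed
  have cE: "card (enumerate P ` {..<m}) = m"
    using inj_enumerate[OF infP] by (simp add: card_image inj_on_subset)
  have mS: "m \<le> card S" using card_mono[OF finS(1) ES] unfolding cE .
  have "S \<subseteq> {1..r} \<union> T"
  proof
    fix p assume "p \<in> S"
    then have p: "prime p" "p \<le> x" unfolding S_def by auto
    have "2 \<le> p" using p(1) by (rule prime_ge_2_nat)
    then show "p \<in> {1..r} \<union> T" using p unfolding T_def by (cases "p \<le> r") auto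
  qed
  then have "card S \<le> card ({1..r} \<union> T)" by (intro card_mono) (use finS in auto)
  also have "\<dots> \<le> card {1..r} + card T" by (rule card_Un_le)
  finally have ST: "card S \<le> r + card T" by simp
  have "r ^ card T = (\<Prod>p\<in>T. r)" by simp
  also have "\<dots> \<le> \<Prod>T" by (rule prod_mono) (auto simp: T_def)
  also have "\<Prod>T \<le> primorial x"
  proof (rule dvd_imp_le)
    show "\<Prod>T dvd primorial x" unfolding primorial_def T_def
      by (rule prod_dvd_prod_subset) auto
    show "0 < primorial x" unfolding primorial_def
      by (rule prod_pos) (auto dest: prime_gt_0_nat)
  qed
  also have "\<dots> \<le> 4^x" by (rule primorial_le)
  finally have "r ^ card T \<le> 4 ^ x" .
  moreover have "r ^ card T = (4::nat) ^ (2 * c * card T)"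
  proof -
    have "(16::nat) = 4^2" by simp
    then have "r ^ card T = (4^2)^(c * card T)" unfolding r_def by (simp add: power_mult)
    then show ?thesis by (metis power_mult mult.assoc)
  qed
  ultimately have "(4::nat) ^ (2 * c * card T) \<le> 4 ^ x" by simp
  then have "2 * c * card T \<le> x" by (rule power_le_imp_le_exp[rotated]) simp
  then have "2 * c * card T < c * m" using xlt by (rule le_less_trans)
  then have "2 * card T < m" using c by (metis mult.assoc mult.commute mult_less_cancel1)
  with mS ST have "m < 2 * r" by simp
  with m show False unfolding r_def by simp
qed

lemma iter_Suc: "iter_prime (Suc k) n = nth_prime (iter_prime k n)"
  unfolding iter_prime_def by simp

lemma iter_ge1: "n \<ge> 1 \<Longrightarrow> iter_prime k n \<ge> 1"
proof (induction k)
  case 0 then show ?case by (simp add: iter_prime_def)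
next
  case (Suc k) then show ?case using nth_prime_gt[of "iter_prime k n"] by (simp add: iter_Suc)
qed

lemma iter_strict_mono: "n \<ge> 1 \<Longrightarrow> strict_mono (\<lambda>k. iter_prime k n)"
proof (rule strict_mono_Suc_iff[THEN iffD2], intro allI)
  fix k assume "n \<ge> 1"
  then show "iter_prime k n < iter_prime (Suc k) n"
    using nth_prime_gt[of "iter_prime k n"] iter_ge1[of n k] by (simp add: iter_Suc)
qed

lemma iter_ratio_eventually:
  assumes n: "n \<ge> 1" and c: "c \<ge> 1"
  shows "eventually (\<lambda>k. c * iter_prime k n \<le> iter_prime (Suc k) n) sequentially"
proof (rule eventually_sequentiallyI[of "Suc (2 * 16^c)"])
  fix k assume k: "Suc (2 * 16^c) \<le> k"
  have "k \<le> iter_prime k n" using strict_mono_imp_increasing[OF iter_strict_mono[OF n]] .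
  with k have "iter_prime k n > 2 * 16^c" by simp
  from nth_prime_big[OF c this] show "c * iter_prime k n \<le> iter_prime (Suc k) n"
    by (simp add: iter_Suc)
qed

lemma iter_ratio_tendsto:
  assumes n: "n \<ge> 1"
  shows "filterlim (\<lambda>k. real (iter_prime (Suc k) n) / real (iter_prime k n)) at_top sequentially"
proof (subst filterlim_at_top, intro allI)
  fix Z :: real
  define c where "c = nat \<lceil>Z\<rceil> + 1"
  have c1: "c \<ge> 1" unfolding c_def by simp
  have Zc: "Z \<le> real c" unfolding c_def by linarith
  show "eventually (\<lambda>k. Z \<le> real (iter_prime (Suc k) n) / real (iter_prime k n)) sequentially"
    using iter_ratio_eventually[OF n c1]
  proof eventually_elim
    case (elim k)
    have pos: "real (iter_prime k n) > 0" using iter_ge1[OF n, of k] by simp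
    have "real c * real (iter_prime k n) \<le> real (iter_prime (Suc k) n)"
      using elim by (metis of_nat_le_iff of_nat_mult)
    then have "real c \<le> real (iter_prime (Suc k) n) / real (iter_prime k n)"
      using pos by (simp add: field_simps)
    then show ?case using Zc by linarith
  qed
qed

lemma no_limpt:
  assumes n: "n \<ge> 1" and x: "x > (0::real)"
  shows "\<not> x islimpt ratio_set (PT n)"
proof
  assume lim: "x islimpt ratio_set (PT n)"
  define a where "a = (\<lambda>k. iter_prime k n)"
  have sm: "strict_mono a" unfolding a_def by (rule iter_strict_mono[OF n])
  have apos: "real (a k) > 0" for k using iter_ge1[OF n, of k] unfolding a_def by simp
  define c where "c = nat \<lceil>2*x + 2/x\<rceil> + 1"
  have c1: "c \<ge> 1" unfolding c_def by simp
  have cbig: "real c > 2*x + 2/x" unfolding c_def by linarith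
  obtain K where K: "\<And>k. k \<ge> K \<Longrightarrow> c * a k \<le> a (Suc k)"
    using iter_ratio_eventually[OF n c1] unfolding a_def eventually_sequentially by blast
  have Kr: "real c * real (a k) \<le> real (a (Suc k))" if "k \<ge> K" for k
    using K[OF that] by (metis of_nat_le_iff of_nat_mult)
  define B where "B = (2*x + 2/x + 1) * real (a K)"
  define M where "M = nat \<lceil>B\<rceil>"
  have amono: "real (a i) \<le> real (a j)" if "i \<le> j" for i j
    using sm that by (simp add: strict_mono_less_eq)
  have x2: "2/x > 0" using x by simp
  have bound: "real (a i) \<le> B \<and> real (a j) \<le> B"
    if ij: "i \<noteq> j" and lo: "x/2 < real (a i) / real (a j)" and hi: "real (a i) / real (a j) < 2*x" for i j
  proof (cases "j < i")
    case True
    have jK: "j < K"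
    proof (rule ccontr)
      assume "\<not> j < K"
      then have "real c * real (a j) \<le> real (a (Suc j))" using Kr by simp
      also have "\<dots> \<le> real (a i)" using True amono by simp
      finally have "real c \<le> real (a i) / real (a j)" using apos[of j] by (simp add: field_simps)
      moreover have "2*x < real c" using cbig x2 by linarith
      ultimately show False using hi by linarith
    qed
    have ajK: "real (a j) \<le> real (a K)" using jK amono by simp
    have "real (a i) < 2*x * real (a j)" using hi apos[of j] by (simp add: field_simps)
    also have "\<dots> \<le> 2*x * real (a K)" using ajK x by simp
    also have "\<dots> \<le> B" unfolding B_def using apos[of K] x2 by (simp add: distrib_right)
    finally have "real (a i) \<le> B" by simp
    moreover have "real (a j) \<le> B" using ajK apos[of K] x2 x unfolding B_def
      by (smt (verit) mult_le_cancel_right1 mult_nonneg_nonneg)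
    ultimately show ?thesis by simp
  next
    case False
    then have True': "i < j" using ij by simp
    have iK: "i < K"
    proof (rule ccontr)
      assume "\<not> i < K"
      then have "real c * real (a i) \<le> real (a (Suc i))" using Kr by simp
      also have "\<dots> \<le> real (a j)" using True' amono by simp
      finally have "real (a i) / real (a j) \<le> 1 / real c" using apos[of j] c1
        by (simp add: field_simps)
      moreover have "1 / real c < x / 2"
      proof -
        have "2/x < real c" using cbig x by linarith
        then show ?thesis using x c1 by (simp add: field_simps)
      qed
      ultimately show False using lo by linarith
    qed
    have aiK: "real (a i) \<le> real (a K)" using iK amono by simp
    have "real (a j) < 2/x * real (a i)" using lo apos[of j] x by (simp add: field_simps)
    also have "\<dots> \<le> 2/x * real (a K)" using aiK x2 by (intro mult_left_mono) auto
    also have "\<dots> \<le> B" unfolding B_def using apos[of K] x by (simp add: distrib_right)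
    finally have "real (a j) \<le> B" by simp
    moreover have "real (a i) \<le> B" using aiK apos[of K] x2 x unfolding B_def
      by (smt (verit) mult_le_cancel_right1 mult_nonneg_nonneg)
    ultimately show ?thesis by simp
  qed
  have idx: "i \<le> M" if "real (a i) \<le> B" for i
  proof -
    have "i \<le> a i" using strict_mono_imp_increasing[OF sm] .
    then have "real i \<le> B" using that by linarith
    then show ?thesis unfolding M_def by linarith
  qed
  have sub: "ratio_set (PT n) \<inter> ball x (x/2) \<subseteq>
      insert 1 ((\<lambda>(i,j). real (a i) / real (a j)) ` ({..M} \<times> {..M}))"
  proof
    fix y assume y: "y \<in> ratio_set (PT n) \<inter> ball x (x/2)"
    then obtain i j where yij: "y = real (a i) / real (a j)"
      unfolding ratio_set_def PT_def a_def by auto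
    have "dist x y < x/2" using y by simp
    then have lo: "x/2 < y" and hi: "y < 2*x" using x unfolding dist_real_def by (auto simp: abs_if split: if_splits)
    show "y \<in> insert 1 ((\<lambda>(i,j). real (a i) / real (a j)) ` ({..M} \<times> {..M}))"
    proof (cases "i = j")
      case True then show ?thesis using yij apos[of j] by simp
    next
      case False
      from bound[OF False] lo hi yij have "real (a i) \<le> B" "real (a j) \<le> B" by auto
      then have "i \<le> M" "j \<le> M" using idx by auto
      then show ?thesis using yij by force
    qed
  qed
  have "finite (ratio_set (PT n) \<inter> ball x (x/2))"
    by (rule finite_subset[OF sub]) simp
  moreover have "infinite (ratio_set (PT n) \<inter> ball x (x/2))"
    using lim x unfolding islimpt_eq_infinite_ball by simp
  ultimately show False by simp
qed

theorem corollary3: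
  fixes n :: nat
  assumes "n \<ge> 1"
  shows "\<not> R_dense (PT n)
    \<and> filterlim (\<lambda>k. real (iter_prime (Suc k) n) / real (iter_prime k n)) at_top sequentially
    \<and> {x::real. x islimpt ratio_set (PT n)} \<inter> {0<..} = {}"
proof (intro conjI)
  show "filterlim (\<lambda>k. real (iter_prime (Suc k) n) / real (iter_prime k n)) at_top sequentially"
    by (rule iter_ratio_tendsto[OF assms])
  show lp: "{x::real. x islimpt ratio_set (PT n)} \<inter> {0<..} = {}"
    using no_limpt[OF assms] by auto
  show "\<not> R_dense (PT n)"
  proof
    assume "R_dense (PT n)"
    then have "{0<..} \<subseteq> ratio_set (PT n) \<union> {x. x islimpt ratio_set (PT n)}"
      unfolding R_dense_def closure_def .
    then have "{0<..} \<subseteq> ratio_set (PT n)" using lp by auto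
    moreover have "ratio_set (PT n) \<subseteq> \<rat>"
      unfolding ratio_set_def by (auto intro: Rats_divide)
    ultimately have "{0<..<1::real} \<subseteq> \<rat>" by auto
    then have "countable {0<..<1::real}" using countable_rat countable_subset by blast
    then show False using uncountable_open_interval[of 0 "1::real"] by simp
  qed
qed

end
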